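(* Let $K\geq 1$ and let $r_{ij}\geq 0$, $i,j\in\{1,2,3,4\}$, be real numbers such that $r_{ij}=r_{ji}$ and $r_{ij}\leq K(r_{ik}+r_{jk})$ for all $i,j,k\in\{1,2,3,4\}$. Then $$\sqrt{r_{12}r_{34}}\leq K\big(\sqrt{r_{13}r_{24}}+\sqrt{r_{14}r_{23}}\big).$$ In particular, $$r_{12}r_{34}\leq 2K^2(r_{13}r_{24}+r_{14}r_{23})\leq (2K)^2\max\{r_{13}r_{24},\ r_{14}r_{23}\}.$$ *)

theory Defs
  imports Complex_Main
begin

end

theory Submission
  imports Defs
begin

lemma core0:
  fixes c d e f :: real
  assumes "0 \<le> d" "d \<le> c" "0 \<le> f" "f \<le> e"
  shows "min (c+f) (d+e) * min (c+e) (d+f) \<le> c*d + e*f + 2*sqrt(c*d)*sqrt(e*f)"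
proof -
  have m2: "min (c+e) (d+f) = d+f" using assms by simp
  have "(d+f) * min (c+f) (d+e) = d * min (c+f) (d+e) + f * min (c+f) (d+e)"
    by (simp add: algebra_simps)
  also have "\<dots> \<le> d*(c+f) + f*(d+e)"
    using assms by (intro add_mono mult_left_mono) auto
  finally have h1: "(d+f) * min (c+f) (d+e) \<le> c*d+e*f+2*d*f" by (simp add: algebra_simps)
  have s1: "d \<le> sqrt(c*d)"
    using assms real_sqrt_le_mono[of "d*d" "c*d"] by (simp add: mult_right_mono)
  have s2: "f \<le> sqrt(e*f)"
    using assms real_sqrt_le_mono[of "f*f" "e*f"] by (simp add: mult_right_mono)
  have "d*f \<le> sqrt(c*d)*sqrt(e*f)" using s1 s2 assms by (intro mult_mono) auto
  then have h2: "c*d+e*f+2*d*f \<le> c*d + e*f + 2*sqrt(c*d)*sqrt(e*f)" by linarith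
  have "min (c+f) (d+e) * min (c+e) (d+f) = (d+f) * min (c+f) (d+e)"
    by (simp add: m2 mult.commute)
  then show ?thesis using h1 h2 by linarith
qed

lemma core:
  fixes c d e f :: real
  assumes "0 \<le> c" "0 \<le> d" "0 \<le> e" "0 \<le> f"
  shows "min (c+f) (d+e) * min (c+e) (d+f) \<le> (sqrt(c*d) + sqrt(e*f))^2"
proof -
  have R: "(sqrt(c*d) + sqrt(e*f))^2 = c*d + e*f + 2*sqrt(c*d)*sqrt(e*f)"
    using assms by (simp add: power2_eq_square algebra_simps real_sqrt_mult)
  have "min (c+f) (d+e) * min (c+e) (d+f) \<le> c*d + e*f + 2*sqrt(c*d)*sqrt(e*f)"
  proof (cases "d \<le> c")
    case True
    then show ?thesis
    proof (cases "f \<le> e")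
      case True
      then show ?thesis using core0[of d c f e] assms \<open>d \<le> c\<close> by simp
    next
      case False
      then show ?thesis using core0[of d c e f] assms \<open>d \<le> c\<close>
        by (simp add: mult.commute add.commute min.commute)
    qed
  next
    case False
    then show ?thesis
    proof (cases "f \<le> e")
      case True
      then show ?thesis using core0[of c d f e] assms \<open>\<not> d \<le> c\<close>
        by (simp add: mult.commute add.commute min.commute)
    next
      case False
      then show ?thesis using core0[of c d e f] assms \<open>\<not> d \<le> c\<close>
        by (simp add: mult.commute add.commute min.commute)
    qed
  qed
  then show ?thesis using R by simp
qed

theorem lemma3p4:
  fixes K :: real and r :: "nat \<Rightarrow> nat \<Rightarrow> real"
  assumes K: "K \<ge> 1"
    and nonneg: "\<And>i j. i \<in> {1..4} \<Longrightarrow> j \<in> {1..4} \<Longrightarrow> r i j \<ge> 0"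
    and sym: "\<And>i j. i \<in> {1..4} \<Longrightarrow> j \<in> {1..4} \<Longrightarrow> r i j = r j i"
    and qtri: "\<And>i j k. i \<in> {1..4} \<Longrightarrow> j \<in> {1..4} \<Longrightarrow> k \<in> {1..4} \<Longrightarrow>
                 r i j \<le> K * (r i k + r j k)"
  shows "sqrt (r 1 2 * r 3 4) \<le> K * (sqrt (r 1 3 * r 2 4) + sqrt (r 1 4 * r 2 3))
         \<and> r 1 2 * r 3 4 \<le> 2 * K^2 * (r 1 3 * r 2 4 + r 1 4 * r 2 3)
         \<and> 2 * K^2 * (r 1 3 * r 2 4 + r 1 4 * r 2 3)
             \<le> (2 * K)^2 * max (r 1 3 * r 2 4) (r 1 4 * r 2 3)"
proof -
  define a where "a = r 1 2"
  define b where "b = r 3 4"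
  define c where "c = r 1 3"
  define d where "d = r 2 4"
  define e where "e = r 1 4"
  define f where "f = r 2 3"
  have pos: "0 \<le> a" "0 \<le> b" "0 \<le> c" "0 \<le> d" "0 \<le> e" "0 \<le> f"
    unfolding a_def b_def c_def d_def e_def f_def by (auto intro: nonneg)
  have a1: "a \<le> K * (c + f)" unfolding a_def c_def f_def using qtri[of 1 2 3] by simp
  have a2: "a \<le> K * (e + d)" unfolding a_def e_def d_def
    using qtri[of 1 2 4] sym[of 4 2] by simp
  have b1: "b \<le> K * (c + e)" unfolding b_def c_def e_def
    using qtri[of 3 4 1] sym[of 3 1] sym[of 4 1] by simp
  have b2: "b \<le> K * (f + d)" unfolding b_def f_def d_def
    using qtri[of 3 4 2] sym[of 3 2] sym[of 4 2] by simp
  have K0: "0 \<le> K" using K by simp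
  have am: "a \<le> K * min (c+f) (d+e)" using a1 a2 by (simp add: add.commute)
  have bm: "b \<le> K * min (c+e) (d+f)" using b1 b2 by (simp add: add.commute)
  have "a*b \<le> (K * min (c+f) (d+e)) * (K * min (c+e) (d+f))"
    using am bm pos by (intro mult_mono) auto
  also have "\<dots> = K^2 * (min (c+f) (d+e) * min (c+e) (d+f))"
    by (simp add: power2_eq_square algebra_simps)
  also have "\<dots> \<le> K^2 * (sqrt(c*d) + sqrt(e*f))^2"
    using core[of c d e f] pos by (intro mult_left_mono) auto
  also have "\<dots> = (K * (sqrt(c*d) + sqrt(e*f)))^2" by (simp add: power_mult_distrib)
  finally have P: "a*b \<le> (K * (sqrt(c*d) + sqrt(e*f)))^2" .
  have nn: "0 \<le> K * (sqrt(c*d) + sqrt(e*f))" using K0 pos by simp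
  have S1: "sqrt (a*b) \<le> K * (sqrt(c*d) + sqrt(e*f))"
    using real_sqrt_le_mono[OF P] nn by simp
  have sq: "(sqrt(c*d) + sqrt(e*f))^2 \<le> 2 * (c*d + e*f)"
  proof -
    have "(sqrt(c*d) - sqrt(e*f))^2 \<ge> 0" by simp
    then show ?thesis using pos
      by (simp add: power2_eq_square algebra_simps real_sqrt_mult)
  qed
  have S2: "a*b \<le> 2*K^2*(c*d+e*f)"
  proof -
    have "(K * (sqrt(c*d) + sqrt(e*f)))^2 = K^2 * (sqrt(c*d) + sqrt(e*f))^2"
      by (simp add: power_mult_distrib)
    also have "\<dots> \<le> K^2 * (2*(c*d+e*f))" using sq by (intro mult_left_mono) auto
    finally show ?thesis using P by (simp add: algebra_simps)
  qed
  have S3: "2*K^2*(c*d+e*f) \<le> (2*K)^2 * max (c*d) (e*f)"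
  proof -
    have "c*d+e*f \<le> 2 * max (c*d) (e*f)" by simp
    then have "2*K^2*(c*d+e*f) \<le> 2*K^2*(2 * max (c*d) (e*f))"
      by (intro mult_left_mono) auto
    then show ?thesis by (simp add: power_mult_distrib)
  qed
  show ?thesis using S1 S2 S3 unfolding a_def b_def c_def d_def e_def f_def by simp
qed

end
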